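(* Let $A,N_1,\dots,N_m\in\mathbb R^{n\times n}$ with $A$ Hurwitz, $B\in\mathbb R^{n\times m}$, and $u=(u_1,\dots,u_m)^T\in L^2$. Let $x(t,0,B)$, $t\ge0$, solve $\dot x(t)=Ax(t)+Bu(t)+\sum_{k=1}^m N_kx(t)u_k(t)$, $x(0)=0$, and suppose that $\sigma(A\otimes I+I\otimes A+\sum_{k=1}^m N_k\otimes N_k)\subset\mathbb C_-$. Let $P$ be the solution to $AP+PA^T+\sum_{k=1}^m N_kPN_k^T=-BB^T$ and let $(v_k)_{k=1,\dots,n}$ be an orthonormal basis of eigenvectors of $P$ with corresponding eigenvalues $(\lambda_k)_{k=1,\dots,n}$. Then for each $k$, $$\sup_{t\ge0}|\langle x(t,0,B),v_k\rangle_2|\le\lambda_k^{1/2}\exp\{0.5\|u^0\|_{L^2}^2\}\,\|u\|_{L^2}.$$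
   Context: $\mathbb C_-=\{z\in\mathbb C:\Re z<0\}$, $\sigma(\cdot)$ denotes the spectrum, $A$ Hurwitz means $\sigma(A)\subset\mathbb C_-$, and $\langle\cdot,\cdot\rangle_2$ is the Euclidean inner product. $L^2$ is the set of $u:[0,\infty)\to\mathbb R^m$ with $\|u\|_{L^2}^2=\int_0^\infty u^T(s)u(s)\,ds<\infty$. The vector $u^0=(u^0_1,\dots,u^0_m)^T$ is defined by $u^0_k\equiv 0$ if $N_k=0$ and $u^0_k=u_k$ otherwise. *)

theory Defs
  imports "HOL-Analysis.Analysis"
begin

definition cmat :: "real^'n^'n \<Rightarrow> complex^'n^'n" where
  "cmat M = (\<chi> i j. complex_of_real (M $ i $ j))"

definition mat_spectrum :: "real^'n^'n \<Rightarrow> complex set" where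
  "mat_spectrum M = {\<mu>. \<exists>w::complex^'n. w \<noteq> 0 \<and> cmat M *v w = \<mu> *s w}"

definition hurwitz :: "real^'n^'n \<Rightarrow> bool" where
  "hurwitz M \<longleftrightarrow> mat_spectrum M \<subseteq> {z. Re z < 0}"

definition kron :: "real^'n^'n \<Rightarrow> real^'n^'n \<Rightarrow> real^('n \<times> 'n)^('n \<times> 'n)" where
  "kron M K = (\<chi> p q. M $ fst p $ fst q * K $ snd p $ snd q)"

definition L2 :: "(real \<Rightarrow> real^'m) \<Rightarrow> bool" where
  "L2 u \<longleftrightarrow> set_borel_measurable lborel {0..} u \<and>
              set_integrable lborel {0..} (\<lambda>s. (norm (u s))\<^sup>2)"

definition L2_norm_sq :: "(real \<Rightarrow> real^'m) \<Rightarrow> real" where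
  "L2_norm_sq u = (LINT s:{0..}|lborel. (norm (u s))\<^sup>2)"

definition u_zero :: "('m \<Rightarrow> real^'n^'n) \<Rightarrow> (real \<Rightarrow> real^'m) \<Rightarrow> real \<Rightarrow> real^'m" where
  "u_zero N u t = (\<chi> k. if N k = 0 then 0 else u t $ k)"

definition bilin_rhs :: "real^'n^'n \<Rightarrow> real^'m^'n \<Rightarrow> ('m \<Rightarrow> real^'n^'n)
     \<Rightarrow> (real \<Rightarrow> real^'m) \<Rightarrow> (real \<Rightarrow> real^'n) \<Rightarrow> real \<Rightarrow> real^'n" where
  "bilin_rhs A B N u x s = A *v x s + B *v u s + (\<Sum>k\<in>UNIV. (u s $ k) *\<^sub>R (N k *v x s))"

text \<open>x is a (Caratheodory) solution on [0,\<infinity>) with x(0) = 0: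
  x(t) = \<integral>_0^t (A x + B u + \<Sum> N_k x u_k) ds, integrand Lebesgue integrable.\<close>
definition solves_bilinear :: "real^'n^'n \<Rightarrow> real^'m^'n \<Rightarrow> ('m \<Rightarrow> real^'n^'n)
     \<Rightarrow> (real \<Rightarrow> real^'m) \<Rightarrow> (real \<Rightarrow> real^'n) \<Rightarrow> bool" where
  "solves_bilinear A B N u x \<longleftrightarrow>
     (\<forall>t\<ge>0. bilin_rhs A B N u x absolutely_integrable_on {0..t} \<and>
             x t = integral {0..t} (bilin_rhs A B N u x))"

end

theory Submission
  imports Defs
begin


lemma le_of_all_eps:
  fixes c d :: real
  assumes "\<And>e. e > 0 \<Longrightarrow> c \<le> e * d"
  shows "c \<le> 0"
proof (rule ccontr)
  assume "\<not> c \<le> 0"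
  hence c: "c > 0" by simp
  show False
  proof (cases "d > 0")
    case True
    have "c \<le> (c / (2*d)) * d" using assms[of "c/(2*d)"] c True by simp
    also have "\<dots> = c/2" using True by simp
    finally show False using c by simp
  next
    case False
    have "c \<le> 1 * d" using assms[of 1] by simp
    thus False using c False by simp
  qed
qed

lemma telescope_bound:
  fixes \<psi> W K :: "real \<Rightarrow> real" and t :: real
  assumes t: "t \<ge> 0"
    and H: "\<And>\<eta>. \<eta> > 0 \<Longrightarrow> \<exists>\<delta>>0. \<forall>a b. 0 \<le> a \<longrightarrow> a \<le> b \<longrightarrow> b \<le> t \<longrightarrow> b - a \<le> \<delta> \<longrightarrow>
              \<psi> b - \<psi> a \<le> \<eta> * (W b - W a) + (K b - K a)"
  shows "\<psi> t - \<psi> 0 \<le> K t - K 0"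
proof -
  have "(\<psi> t - \<psi> 0) - (K t - K 0) \<le> 0"
  proof (rule le_of_all_eps[where d = "W t - W 0"])
    fix \<eta> :: real assume "\<eta> > 0"
    then obtain \<delta> where d: "\<delta> > 0" and D: "\<And>a b. 0 \<le> a \<Longrightarrow> a \<le> b \<Longrightarrow> b \<le> t \<Longrightarrow> b - a \<le> \<delta> \<Longrightarrow>
              \<psi> b - \<psi> a \<le> \<eta> * (W b - W a) + (K b - K a)" using H by blast
    obtain n :: nat where n: "t / \<delta> < real n" using reals_Archimedean2 by blast
    have "t / \<delta> \<ge> 0" using t d by simp
    hence "0 < real n" using n by linarith
    hence npos: "n > 0" by simp
    define a where "a = (\<lambda>i::nat. real i * t / real n)"
    have step: "\<psi> (a (Suc i)) - \<psi> (a i) \<le> \<eta> * (W (a (Suc i)) - W (a i)) + (K (a (Suc i)) - K (a i))"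
      if "i < n" for i
    proof (rule D)
      show "0 \<le> a i" using t by (simp add: a_def)
      show "a i \<le> a (Suc i)" using t by (simp add: a_def divide_right_mono mult_right_mono)
      have "real (Suc i) \<le> real n" using that by simp
      hence "real (Suc i) * t \<le> real n * t" using t by (rule mult_right_mono)
      thus "a (Suc i) \<le> t" using npos by (simp add: a_def field_simps)
      have "a (Suc i) - a i = t / real n" by (simp add: a_def add_divide_distrib distrib_right)
      also have "\<dots> \<le> \<delta>" using n d npos by (simp add: field_simps)
      finally show "a (Suc i) - a i \<le> \<delta>" .
    qed
    have an: "a n = t" "a 0 = 0" using npos by (auto simp: a_def)
    have "\<psi> t - \<psi> 0 = (\<Sum>i<n. \<psi> (a (Suc i)) - \<psi> (a i))"
      by (subst sum_lessThan_telescope) (simp add: an)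
    also have "\<dots> \<le> (\<Sum>i<n. \<eta> * (W (a (Suc i)) - W (a i)) + (K (a (Suc i)) - K (a i)))"
      by (rule sum_mono) (simp add: step)
    also have "\<dots> = \<eta> * (W t - W 0) + (K t - K 0)"
      using sum_lessThan_telescope[of "\<lambda>i. W (a i)" n] sum_lessThan_telescope[of "\<lambda>i. K (a i)" n]
      by (simp add: sum.distrib an flip: sum_distrib_left)
    finally show "(\<psi> t - \<psi> 0) - (K t - K 0) \<le> \<eta> * (W t - W 0)" by simp
  qed
  thus ?thesis by simp
qed



lemma inner_Qsym:
  fixes Q :: "real^'n^'n"
  assumes "transpose Q = Q"
  shows "u \<bullet> (Q *v w) = w \<bullet> (Q *v u)"
proof -
  have "u \<bullet> (Q *v w) = (\<Sum>i\<in>UNIV. \<Sum>j\<in>UNIV. u$i * Q$i$j * w$j)"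
    by (simp add: inner_vec_def matrix_vector_mult_def sum_distrib_left mult.assoc)
  also have "\<dots> = (\<Sum>j\<in>UNIV. \<Sum>i\<in>UNIV. u$i * Q$i$j * w$j)" by (rule sum.swap)
  also have "\<dots> = w \<bullet> (Q *v u)"
  proof -
    have "\<And>i j. Q$i$j = Q$j$i" using assms by (metis transpose_def vec_lambda_beta)
    thus ?thesis
      by (simp add: inner_vec_def matrix_vector_mult_def sum_distrib_left mult_ac)
  qed
  finally show ?thesis .
qed

lemma matrix_bound:
  fixes Q :: "real^'n^'n"
  obtains c where "c > 0" "\<And>z. norm (Q *v z) \<le> c * norm z"
proof -
  have "bounded_linear (\<lambda>z. Q *v z)"
    by (simp add: linear_conv_bounded_linear)
  then obtain c where "c > 0" "\<And>z. norm (Q *v z) \<le> norm z * c"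
    using bounded_linear.pos_bounded by blast
  thus ?thesis using that by (metis mult.commute)
qed

lemma energy_estimate:
  fixes f x :: "real \<Rightarrow> real^'n" and Q :: "real^'n^'n" and g k :: "real \<Rightarrow> real" and t :: real
  assumes t: "t \<ge> 0"
    and fint: "f absolutely_integrable_on {0..t}"
    and xdef: "\<forall>s\<in>{0..t}. x s = integral {0..s} f"
    and gint: "g integrable_on {0..t}" and kint: "k integrable_on {0..t}"
    and gpos: "\<forall>s\<in>{0..t}. g s \<ge> 0" and kpos: "\<forall>s\<in>{0..t}. k s \<ge> 0"
    and Qsym: "transpose Q = Q" and Qpsd: "\<forall>w. w \<bullet> (Q *v w) \<ge> 0"
    and ineq: "\<forall>s\<in>{0..t}. 2 * (f s \<bullet> (Q *v x s)) \<le> g s * (x s \<bullet> (Q *v x s)) + k s"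
  shows "x t \<bullet> (Q *v x t) \<le> exp (integral {0..t} g) * integral {0..t} k"
proof -
  define \<phi> where "\<phi> s = x s \<bullet> (Q *v x s)" for s
  define G where "G s = integral {0..s} g" for s
  define K where "K s = integral {0..s} k" for s
  define F where "F s = integral {0..s} (\<lambda>r. norm (f r))" for s
  define \<psi> where "\<psi> s = exp (- G s) * \<phi> s" for s
  have fi: "f integrable_on {0..t}" and nfi: "(\<lambda>r. norm (f r)) integrable_on {0..t}"
    using absolutely_integrable_on_def[THEN iffD1, OF fint] by auto
  have sub: "h integrable_on {a..b}" if "h integrable_on {0..t}" "0 \<le> a" "b \<le> t" for h :: "real \<Rightarrow> 'c::euclidean_space" and a b
    by (rule integrable_on_subinterval[OF that(1)]) (use that in auto)
  have comb: "integral {0..b} h - integral {0..a} h = integral {a..b} h"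
    if "h integrable_on {0..t}" "0 \<le> a" "a \<le> b" "b \<le> t" for h :: "real \<Rightarrow> 'c::euclidean_space" and a b
    using Henstock_Kurzweil_Integration.integral_combine[where a=0 and c=a and b=b and f=h] sub[of h 0 b, OF that(1)] that by (auto simp: algebra_simps)
  have xcont: "continuous_on {0..t} x"
    by (rule continuous_on_eq[OF indefinite_integral_continuous_1[OF fi]]) (use xdef in auto)
  have phicont: "continuous_on {0..t} \<phi>"
  proof -
    have "continuous_on {0..t} (\<lambda>s. Q *v x s)" by (rule linear_continuous_on_compose[OF xcont]) simp
    thus ?thesis unfolding \<phi>_def by (intro continuous_on_inner xcont)
  qed
  have ucx: "uniformly_continuous_on {0..t} x"
    by (rule compact_uniformly_continuous[OF xcont]) simp
  have ucp: "uniformly_continuous_on {0..t} \<phi>"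
    by (rule compact_uniformly_continuous[OF phicont]) simp
  obtain c where c: "c > 0" "\<And>z. norm (Q *v z) \<le> c * norm z" using matrix_bound by blast
  have phinn: "\<phi> s \<ge> 0" for s using Qpsd by (simp add: \<phi>_def)
  have dG: "G b - G a = integral {a..b} g" "G b - G a \<ge> 0"
    if "0 \<le> a" "a \<le> b" "b \<le> t" for a b
  proof -
    show 1: "G b - G a = integral {a..b} g" unfolding G_def using comb[OF gint that] .
    show "G b - G a \<ge> 0" unfolding 1
      by (rule integral_nonneg[OF sub[OF gint]]) (use that gpos in auto)
  qed
  have dK: "K b - K a = integral {a..b} k" "K b - K a \<ge> 0"
    if "0 \<le> a" "a \<le> b" "b \<le> t" for a b
  proof -
    show 1: "K b - K a = integral {a..b} k" unfolding K_def using comb[OF kint that] .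
    show "K b - K a \<ge> 0" unfolding 1
      by (rule integral_nonneg[OF sub[OF kint]]) (use that kpos in auto)
  qed
  have dF: "F b - F a = integral {a..b} (\<lambda>r. norm (f r))" "F b - F a \<ge> 0"
    if "0 \<le> a" "a \<le> b" "b \<le> t" for a b
  proof -
    show 1: "F b - F a = integral {a..b} (\<lambda>r. norm (f r))" unfolding F_def using comb[OF nfi that] .
    show "F b - F a \<ge> 0" unfolding 1
      by (rule integral_nonneg[OF sub[OF nfi]]) (use that in auto)
  qed
  have G0: "G s \<ge> 0" if "0 \<le> s" "s \<le> t" for s
    using dG(2)[of 0 s] that by (simp add: G_def)
  have dx: "x b - x a = integral {a..b} f" if "0 \<le> a" "a \<le> b" "b \<le> t" for a b
    using comb[OF fi that] xdef that by auto
  have main: "\<exists>\<delta>>0. \<forall>a b. 0 \<le> a \<longrightarrow> a \<le> b \<longrightarrow> b \<le> t \<longrightarrow> b - a \<le> \<delta> \<longrightarrow>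
              \<psi> b - \<psi> a \<le> \<eta> * ((G b + F b) - (G a + F a)) + (K b - K a)" if eta: "\<eta> > 0" for \<eta>
  proof -
    obtain d1 where d1: "d1 > 0" "\<And>s s'. s \<in> {0..t} \<Longrightarrow> s' \<in> {0..t} \<Longrightarrow> dist s' s < d1 \<Longrightarrow> dist (x s') (x s) < \<eta> / (2 * c)"
      using ucx[unfolded uniformly_continuous_on_def, rule_format, of "\<eta> / (2*c)"] eta c by auto
    obtain d2 where d2: "d2 > 0" "\<And>s s'. s \<in> {0..t} \<Longrightarrow> s' \<in> {0..t} \<Longrightarrow> dist s' s < d2 \<Longrightarrow> dist (\<phi> s') (\<phi> s) < \<eta>"
      using ucp[unfolded uniformly_continuous_on_def, rule_format, of "\<eta>"] eta by auto
    define \<delta> where "\<delta> = min d1 d2 / 2"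
    have \<delta>: "\<delta> > 0" "\<delta> < d1" "\<delta> < d2" using d1 d2 by (auto simp: \<delta>_def)
    show ?thesis
    proof (intro exI[of _ \<delta>] conjI allI impI \<delta>(1))
      fix a b :: real assume ab: "0 \<le> a" "a \<le> b" "b \<le> t" "b - a \<le> \<delta>"
      define z where "z = x b + x a"
      have pw: "f s \<bullet> (Q *v z) \<le> g s * (\<phi> a + \<eta>) + k s + \<eta> * norm (f s)" if s: "s \<in> {a..b}" for s
      proof -
        have s0: "s \<in> {0..t}" using s ab by auto
        have a0: "a \<in> {0..t}" "b \<in> {0..t}" using ab by auto
        have "dist s b < d1" "dist s a < d1" "dist s a < d2"
          using s ab \<delta> by (auto simp: dist_real_def)
        hence xb: "norm (x b - x s) < \<eta> / (2*c)" and xa: "norm (x a - x s) < \<eta> / (2*c)"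
          and pa: "\<phi> s < \<phi> a + \<eta>"
          using d1(2)[OF s0 a0(2)] d1(2)[OF s0 a0(1)] d2(2)[OF a0(1) s0]
          by (auto simp: dist_norm dist_commute dist_real_def)
        have zz: "z = 2 *\<^sub>R x s + ((x b - x s) + (x a - x s))"
          by (simp add: z_def scaleR_2 algebra_simps)
        have split: "f s \<bullet> (Q *v z) = 2 * (f s \<bullet> (Q *v x s)) + f s \<bullet> (Q *v ((x b - x s) + (x a - x s)))"
          unfolding zz matrix_vector_right_distrib matrix_vector_mult_scaleR inner_add_right inner_scaleR_right ..
        have "f s \<bullet> (Q *v ((x b - x s) + (x a - x s))) \<le> norm (f s) * norm (Q *v ((x b - x s) + (x a - x s)))"
          by (rule order_trans[OF abs_ge_self Cauchy_Schwarz_ineq2])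
        also have "\<dots> \<le> norm (f s) * (c * norm ((x b - x s) + (x a - x s)))"
          by (intro mult_left_mono c(2)) simp
        also have "\<dots> \<le> norm (f s) * (c * (\<eta> / (2*c) + \<eta> / (2*c)))"
        proof -
          have "norm ((x b - x s) + (x a - x s)) \<le> \<eta> / (2*c) + \<eta> / (2*c)"
            using norm_triangle_ineq[of "x b - x s" "x a - x s"] xa xb by linarith
          thus ?thesis using c(1) by (intro mult_left_mono) auto
        qed
        also have "\<dots> = \<eta> * norm (f s)" using c(1) by (simp add: field_simps)
        finally have e1: "f s \<bullet> (Q *v ((x b - x s) + (x a - x s))) \<le> \<eta> * norm (f s)" .
        have e2: "2 * (f s \<bullet> (Q *v x s)) \<le> g s * \<phi> s + k s" using ineq s0 by (simp add: \<phi>_def)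
        have e3: "g s * \<phi> s \<le> g s * (\<phi> a + \<eta>)" using gpos s0 pa by (intro mult_left_mono) auto
        show ?thesis using split e1 e2 e3 by linarith
      qed
      have ii: "(\<lambda>s. f s \<bullet> (Q *v z)) integrable_on {a..b}"
        using integrable_linear[OF sub[OF fi ab(1) ab(3)] bounded_linear_inner_left[of "Q *v z"]]
        by (simp add: o_def)
      have ig: "g integrable_on {a..b}" using sub[OF gint ab(1) ab(3)] .
      have ik: "k integrable_on {a..b}" using sub[OF kint ab(1) ab(3)] .
      have inf: "(\<lambda>r. norm (f r)) integrable_on {a..b}" using sub[OF nfi ab(1) ab(3)] .
      have ig1: "(\<lambda>s. g s * (\<phi> a + \<eta>)) integrable_on {a..b}" by (rule integrable_on_mult_left[OF ig])
      have inf1: "(\<lambda>s. \<eta> * norm (f s)) integrable_on {a..b}" by (rule integrable_on_mult_right[OF inf])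
      have irhs: "(\<lambda>s. g s * (\<phi> a + \<eta>) + k s + \<eta> * norm (f s)) integrable_on {a..b}"
        by (intro integrable_add ig1 ik inf1)
      have "(x b - x a) \<bullet> (Q *v z) = x b \<bullet> (Q *v x b) + x b \<bullet> (Q *v x a) - x a \<bullet> (Q *v x b) - x a \<bullet> (Q *v x a)"
        unfolding z_def matrix_vector_right_distrib inner_add_right inner_diff_left by simp
      hence "\<phi> b - \<phi> a = (x b - x a) \<bullet> (Q *v z)"
        using inner_Qsym[OF Qsym, of "x a" "x b"] by (simp add: \<phi>_def)
      also have "\<dots> = integral {a..b} (\<lambda>s. f s \<bullet> (Q *v z))"
        using integral_linear[OF sub[OF fi ab(1) ab(3)] bounded_linear_inner_left[of "Q *v z"]]
        by (simp add: o_def dx[OF ab(1-3)])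
      also have "\<dots> \<le> integral {a..b} (\<lambda>s. g s * (\<phi> a + \<eta>) + k s + \<eta> * norm (f s))"
        by (rule integral_le[OF ii irhs pw])
      also have "\<dots> = integral {a..b} g * (\<phi> a + \<eta>) + integral {a..b} k + \<eta> * integral {a..b} (\<lambda>r. norm (f r))"
        by (simp add: integral_add[OF integrable_add[OF ig1 ik] inf1] integral_add[OF ig1 ik])
      also have "\<dots> = (\<phi> a + \<eta>) * (G b - G a) + (K b - K a) + \<eta> * (F b - F a)"
        by (simp only: dG(1)[OF ab(1-3)] dK(1)[OF ab(1-3)] dF(1)[OF ab(1-3)] mult.commute)
      finally have phid: "\<phi> b - \<phi> a \<le> (\<phi> a + \<eta>) * (G b - G a) + (K b - K a) + \<eta> * (F b - F a)" .
      define e where "e = exp (- G b)"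
      define e' where "e' = exp (- G a)"
      have e: "0 < e" "e \<le> 1" using G0[of b] ab by (auto simp: e_def)
      have "e' = e * exp (G b - G a)" by (simp add: e_def e'_def flip: exp_add)
      also have "\<dots> \<ge> e * (1 + (G b - G a))"
        using e by (intro mult_left_mono exp_ge_add_one_self) auto
      finally have e': "e' \<ge> e * (1 + (G b - G a))" .
      have "\<psi> b - \<psi> a = e * \<phi> b - e' * \<phi> a" by (simp add: \<psi>_def e_def e'_def)
      also have "\<dots> \<le> e * \<phi> b - e * (1 + (G b - G a)) * \<phi> a"
        using e' phinn[of a] by (simp add: mult_right_mono)
      also have "\<dots> = e * (\<phi> b - \<phi> a - (G b - G a) * \<phi> a)" by (simp add: algebra_simps)
      also have "\<dots> \<le> e * (\<eta> * (G b - G a) + (K b - K a) + \<eta> * (F b - F a))"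
        using phid e by (intro mult_left_mono) (auto simp: algebra_simps)
      also have "\<dots> \<le> 1 * (\<eta> * (G b - G a) + (K b - K a) + \<eta> * (F b - F a))"
        using e dG(2)[OF ab(1-3)] dK(2)[OF ab(1-3)] dF(2)[OF ab(1-3)] eta
        by (intro mult_right_mono) auto
      finally show "\<psi> b - \<psi> a \<le> \<eta> * ((G b + F b) - (G a + F a)) + (K b - K a)"
        by (simp add: algebra_simps)
    qed
  qed
  have tel: "\<psi> t - \<psi> 0 \<le> K t - K 0"
    by (rule telescope_bound[OF t main]) auto
  have x0: "x 0 = 0" using xdef t by auto
  have "exp (- G t) * \<phi> t \<le> K t" using tel x0 by (simp add: \<psi>_def \<phi>_def G_def K_def)
  hence "exp (G t) * (exp (- G t) * \<phi> t) \<le> exp (G t) * K t" by (simp add: mult_left_mono)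
  hence "\<phi> t \<le> exp (G t) * K t" by (simp add: mult.assoc[symmetric] flip: exp_add)
  thus ?thesis by (simp add: \<phi>_def G_def K_def)
qed



definition vecm :: "real^'n^'n \<Rightarrow> real^('n \<times> 'n)" where
  "vecm X = (\<chi> p. X $ fst p $ snd p)"

definition unvecm :: "real^('n \<times> 'n) \<Rightarrow> real^'n^'n" where
  "unvecm p = (\<chi> i j. p $ (i, j))"

definition Lmap :: "real^'n^'n \<Rightarrow> ('m \<Rightarrow> real^'n^'n) \<Rightarrow> real^'n^'n \<Rightarrow> real^'n^'n" where
  "Lmap A N X = A ** X + X ** transpose A + (\<Sum>k\<in>UNIV. N k ** X ** transpose (N k))"

definition Lmat :: "real^'n^'n \<Rightarrow> ('m \<Rightarrow> real^'n^'n) \<Rightarrow> real^('n \<times> 'n)^('n \<times> 'n)" where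
  "Lmat A N = kron A (mat 1) + kron (mat 1) A + (\<Sum>k\<in>UNIV. kron (N k) (N k))"

lemma unvecm_vecm[simp]: "unvecm (vecm X) = X"
  by (simp add: unvecm_def vecm_def vec_eq_iff)

lemma vecm_unvecm[simp]: "vecm (unvecm p) = p"
  by (simp add: unvecm_def vecm_def vec_eq_iff)

lemma vecm_inj: "vecm X = vecm Y \<longleftrightarrow> X = Y"
  by (metis unvecm_vecm)

lemma vecm_add: "vecm (X + Y) = vecm X + vecm Y"
  by (simp add: vecm_def vec_eq_iff)

lemma vecm_diff: "vecm (X - Y) = vecm X - vecm Y"
  by (simp add: vecm_def vec_eq_iff)

lemma vecm_scaleR: "vecm (c *\<^sub>R X) = c *\<^sub>R vecm X"
  by (simp add: vecm_def vec_eq_iff)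

lemma vecm_uminus: "vecm (- X) = - vecm X"
  by (simp add: vecm_def vec_eq_iff)

lemma vecm_sum: "vecm (\<Sum>k\<in>S. X k) = (\<Sum>k\<in>S. vecm (X k))"
  by (induction S rule: infinite_finite_induct) (auto simp: vecm_add vecm_def vec_eq_iff)

lemma vecm_0: "vecm 0 = 0" by (simp add: vecm_def vec_eq_iff)

lemma sum_mat_vec: "(\<Sum>k\<in>S. M k) *v w = (\<Sum>k\<in>S. M k *v w)"
  for M :: "'k \<Rightarrow> real^'a^'b"
  by (induction S rule: infinite_finite_induct) (auto simp: matrix_vector_mult_add_rdistrib)

lemma kron_vecm: "kron M K *v vecm X = vecm (M ** X ** transpose K)"
proof -
  have "(kron M K *v vecm X) $ (i, j) = (M ** X ** transpose K) $ i $ j" for i j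
  proof -
    have "(kron M K *v vecm X) $ (i, j) = (\<Sum>q\<in>UNIV. M $ i $ fst q * K $ j $ snd q * X $ fst q $ snd q)"
      by (simp add: kron_def vecm_def matrix_vector_mult_def)
    also have "\<dots> = (\<Sum>a\<in>UNIV. \<Sum>b\<in>UNIV. M $ i $ a * K $ j $ b * X $ a $ b)"
      by (simp add: UNIV_Times_UNIV[symmetric] sum.cartesian_product case_prod_beta del: UNIV_Times_UNIV)
    also have "\<dots> = (\<Sum>b\<in>UNIV. \<Sum>a\<in>UNIV. M $ i $ a * K $ j $ b * X $ a $ b)"
      by (rule sum.swap)
    also have "\<dots> = (M ** X ** transpose K) $ i $ j"
      by (simp add: matrix_matrix_mult_def transpose_def sum_distrib_left sum_distrib_right mult_ac)
    finally show ?thesis .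
  qed
  thus ?thesis by (simp add: vec_eq_iff vecm_def)
qed

lemma mat1_vecm: "mat 1 *v vecm X = vecm X" by simp

lemma Lmat_vecm: "Lmat A N *v vecm X = vecm (Lmap A N X)"
  by (simp add: Lmat_def Lmap_def matrix_vector_mult_add_rdistrib sum_mat_vec kron_vecm vecm_add vecm_sum)

lemma transpose_sum: "transpose (\<Sum>k\<in>S. X k) = (\<Sum>k\<in>S. transpose (X k))"
  for X :: "'k \<Rightarrow> real^'n^'n"
  by (induction S rule: infinite_finite_induct) (auto simp: transpose_def vec_eq_iff)

lemma transpose_add': "transpose (X + Y) = transpose X + transpose (Y :: real^'n^'n)"
  by (simp add: transpose_def vec_eq_iff)

lemma Lmap_transpose: "Lmap A N (transpose X) = transpose (Lmap A N X)"
  by (simp add: Lmap_def transpose_add' transpose_sum matrix_transpose_mul matrix_mul_assoc)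




lemma inner_transpose: "w \<bullet> (M *v z) = (transpose M *v w) \<bullet> (z :: real^'a)"
  for M :: "real^'a^'b"
proof -
  have "w \<bullet> (M *v z) = (\<Sum>i\<in>UNIV. \<Sum>j\<in>UNIV. w$i * M$i$j * z$j)"
    by (simp add: inner_vec_def matrix_vector_mult_def sum_distrib_left mult.assoc)
  also have "\<dots> = (\<Sum>j\<in>UNIV. \<Sum>i\<in>UNIV. w$i * M$i$j * z$j)" by (rule sum.swap)
  also have "\<dots> = (transpose M *v w) \<bullet> z"
    by (simp add: inner_vec_def matrix_vector_mult_def transpose_def sum_distrib_right sum_distrib_left mult_ac)
  finally show ?thesis .
qed

lemma psd_kernel:
  fixes P :: "real^'n^'n"
  assumes sym: "transpose P = P" and psd: "\<forall>w. w \<bullet> (P *v w) \<ge> 0" and z: "w \<bullet> (P *v w) = 0"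
  shows "P *v w = 0"
proof -
  define z where "z = P *v w"
  have key: "0 \<le> - 2 * t * (z \<bullet> z) + t^2 * (z \<bullet> (P *v z))" for t :: real
  proof -
    have "0 \<le> (w - t *\<^sub>R z) \<bullet> (P *v (w - t *\<^sub>R z))" using psd by blast
    also have "\<dots> = w \<bullet> (P *v w) - t * (w \<bullet> (P *v z)) - t * (z \<bullet> (P *v w)) + t^2 * (z \<bullet> (P *v z))"
      unfolding matrix_vector_mult_diff_distrib matrix_vector_mult_scaleR inner_diff_left inner_diff_right
        inner_scaleR_left inner_scaleR_right power2_eq_square by algebra
    also have "\<dots> = - 2 * t * (z \<bullet> z) + t^2 * (z \<bullet> (P *v z))"
      using inner_Qsym[OF sym, of w z] z by (simp add: z_def)
    finally show ?thesis .
  qed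
  have "z \<bullet> z \<le> 0"
  proof (rule le_of_all_eps[where d = "(z \<bullet> (P *v z)) / 2"])
    fix e :: real assume e: "e > 0"
    have "0 \<le> - 2 * e * (z \<bullet> z) + e^2 * (z \<bullet> (P *v z))" by (rule key)
    hence "2 * e * (z \<bullet> z) \<le> e * (e * (z \<bullet> (P *v z)))" by (simp add: power2_eq_square algebra_simps)
    hence "2 * (z \<bullet> z) \<le> e * (z \<bullet> (P *v z))" using e by simp
    thus "z \<bullet> z \<le> e * ((z \<bullet> (P *v z)) / 2)" by simp
  qed
  hence "z \<bullet> z = 0" using inner_ge_zero[of z] by linarith
  hence "z = 0" by simp
  thus ?thesis by (simp add: z_def)
qed

lemma psd_cs:
  fixes P :: "real^'n^'n"
  assumes sym: "transpose P = P" and psd: "\<forall>w. w \<bullet> (P *v w) \<ge> 0"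
  shows "(a \<bullet> (P *v b))^2 \<le> (a \<bullet> (P *v a)) * (b \<bullet> (P *v b))"
proof -
  define \<alpha> where "\<alpha> = a \<bullet> (P *v a)"
  define \<beta> where "\<beta> = a \<bullet> (P *v b)"
  define \<gamma> where "\<gamma> = b \<bullet> (P *v b)"
  have key: "0 \<le> \<alpha> + 2 * t * \<beta> + t^2 * \<gamma>" for t :: real
  proof -
    have "0 \<le> (a + t *\<^sub>R b) \<bullet> (P *v (a + t *\<^sub>R b))" using psd by blast
    also have "\<dots> = \<alpha> + t * (a \<bullet> (P *v b)) + t * (b \<bullet> (P *v a)) + t^2 * \<gamma>"
      unfolding \<alpha>_def \<gamma>_def matrix_vector_right_distrib matrix_vector_mult_scaleR inner_add_left inner_add_right
        inner_scaleR_left inner_scaleR_right power2_eq_square by algebra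
    also have "\<dots> = \<alpha> + 2 * t * \<beta> + t^2 * \<gamma>"
      using inner_Qsym[OF sym, of a b] by (simp add: \<beta>_def)
    finally show ?thesis .
  qed
  have g0: "\<gamma> \<ge> 0" using psd by (simp add: \<gamma>_def)
  show ?thesis
  proof (cases "\<gamma> = 0")
    case True
    have "\<beta> = 0"
    proof (rule ccontr)
      assume b: "\<beta> \<noteq> 0"
      have "0 \<le> \<alpha> + 2 * (-(\<alpha> + 1) / (2 * \<beta>)) * \<beta>" using key[of "-(\<alpha>+1)/(2*\<beta>)"] True by simp
      also have "\<dots> = -1" using b by (simp add: field_simps)
      finally show False by simp
    qed
    thus ?thesis using True by (simp add: \<beta>_def \<gamma>_def)
  next
    case False
    hence gp: "\<gamma> > 0" using g0 by simp
    have "0 \<le> \<alpha> + 2 * (-\<beta>/\<gamma>) * \<beta> + (-\<beta>/\<gamma>)^2 * \<gamma>" by (rule key)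
    also have "\<dots> = \<alpha> - \<beta>^2 / \<gamma>" using gp by (simp add: field_simps power2_eq_square)
    finally have "\<beta>^2 / \<gamma> \<le> \<alpha>" by simp
    hence "\<beta>^2 \<le> \<alpha> * \<gamma>" using gp by (simp add: pos_divide_le_eq)
    thus ?thesis by (simp add: \<alpha>_def \<beta>_def \<gamma>_def)
  qed
qed



definition Mt :: "real^'n^'n \<Rightarrow> ('m \<Rightarrow> real^'n^'n) \<Rightarrow> real \<Rightarrow> real^('n \<times> 'n)^('n \<times> 'n)" where
  "Mt A N \<tau> = \<tau> *\<^sub>R Lmat A N - (1 - \<tau>) *\<^sub>R mat 1"

lemma neg_mat_vec: "(- M) *v w = - (M *v (w :: real^'a))" for M :: "real^'a^'b"
  by (simp add: matrix_vector_mult_def vec_eq_iff sum_negf)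

lemma Mt_vecm: "Mt A N \<tau> *v vecm X = vecm (\<tau> *\<^sub>R Lmap A N X - (1 - \<tau>) *\<^sub>R X)"
  by (simp add: Mt_def matrix_vector_mult_diff_rdistrib Lmat_vecm vecm_diff vecm_scaleR
      flip: scaleR_matrix_vector_assoc)

lemma cmat_real_vec:
  "cmat M *v (\<chi> i. complex_of_real (w $ i)) = (\<chi> i. complex_of_real ((M *v w) $ i))"
  by (simp add: cmat_def matrix_vector_mult_def vec_eq_iff)

lemma Lmat_no_nonneg_eig:
  assumes hyp: "mat_spectrum (Lmat A N) \<subseteq> {z. Re z < 0}"
    and r: "r \<ge> 0" and eq: "Lmat A N *v w = r *\<^sub>R w"
  shows "w = 0"
proof (rule ccontr)
  assume w: "w \<noteq> 0"
  define wc where "wc = (\<chi> i. complex_of_real (w $ i))"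
  have "wc \<noteq> 0" using w by (auto simp: wc_def vec_eq_iff)
  moreover have "cmat (Lmat A N) *v wc = complex_of_real r *s wc"
    unfolding wc_def cmat_real_vec eq by (simp add: vec_eq_iff)
  ultimately have "complex_of_real r \<in> mat_spectrum (Lmat A N)"
    unfolding mat_spectrum_def by blast
  with hyp r show False by auto
qed

lemma Mt_inj:
  assumes hyp: "mat_spectrum (Lmat A N) \<subseteq> {z. Re z < 0}"
    and \<tau>: "0 \<le> \<tau>" "\<tau> \<le> 1" and eq: "Mt A N \<tau> *v w = 0"
  shows "w = 0"
proof (cases "\<tau> = 0")
  case True
  thus ?thesis using eq by (simp add: Mt_def neg_mat_vec)
next
  case False
  hence tp: "\<tau> > 0" using \<tau> by simp
  have "\<tau> *\<^sub>R (Lmat A N *v w) - (1 - \<tau>) *\<^sub>R w = 0"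
    using eq by (simp add: Mt_def matrix_vector_mult_diff_rdistrib flip: scaleR_matrix_vector_assoc)
  hence "\<tau> *\<^sub>R (Lmat A N *v w) = (1 - \<tau>) *\<^sub>R w" by simp
  hence "inverse \<tau> *\<^sub>R (\<tau> *\<^sub>R (Lmat A N *v w)) = inverse \<tau> *\<^sub>R ((1 - \<tau>) *\<^sub>R w)" by simp
  hence eqw: "Lmat A N *v w = ((1 - \<tau>) / \<tau>) *\<^sub>R w" using tp by (simp add: divide_inverse mult.commute)
  show ?thesis using Lmat_no_nonneg_eig[OF hyp _ eqw] \<tau> tp by simp
qed

lemma Mt_det:
  assumes hyp: "mat_spectrum (Lmat A N) \<subseteq> {z. Re z < 0}" and \<tau>: "0 \<le> \<tau>" "\<tau> \<le> 1"
  shows "det (Mt A N \<tau>) \<noteq> 0"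
proof -
  have "inj (\<lambda>x. Mt A N \<tau> *v x)"
  proof (rule injI)
    fix a b assume "Mt A N \<tau> *v a = Mt A N \<tau> *v b"
    hence "Mt A N \<tau> *v (a - b) = 0" by (simp add: matrix_vector_mult_diff_distrib)
    thus "a = b" using Mt_inj[OF hyp \<tau>, of "a - b"] by simp
  qed
  thus ?thesis using det_nz_iff_inj[of "\<lambda>x. Mt A N \<tau> *v x"] by simp
qed

lemma Mt_uniq:
  assumes hyp: "mat_spectrum (Lmat A N) \<subseteq> {z. Re z < 0}" and \<tau>: "0 \<le> \<tau>" "\<tau> \<le> 1"
    and eq: "\<tau> *\<^sub>R Lmap A N X - (1 - \<tau>) *\<^sub>R X = \<tau> *\<^sub>R Lmap A N Y - (1 - \<tau>) *\<^sub>R Y"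
  shows "X = Y"
proof -
  have "Mt A N \<tau> *v (vecm X - vecm Y) = 0"
    by (simp add: matrix_vector_mult_diff_distrib Mt_vecm eq)
  hence "vecm X - vecm Y = 0" by (rule Mt_inj[OF hyp \<tau>])
  thus ?thesis by (simp add: vecm_inj)
qed

definition solv :: "real^'n^'n \<Rightarrow> ('m \<Rightarrow> real^'n^'n) \<Rightarrow> real^'n^'n \<Rightarrow> real \<Rightarrow> real^('n \<times> 'n)" where
  "solv A N C \<tau> = (\<chi> k. det (\<chi> i j. if j = k then (- vecm C) $ i else Mt A N \<tau> $ i $ j) / det (Mt A N \<tau>))"

definition PP :: "real^'n^'n \<Rightarrow> ('m \<Rightarrow> real^'n^'n) \<Rightarrow> real^'n^'n \<Rightarrow> real \<Rightarrow> real^'n^'n" where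
  "PP A N C \<tau> = unvecm (solv A N C \<tau>)"

lemma PP_eq:
  assumes hyp: "mat_spectrum (Lmat A N) \<subseteq> {z. Re z < 0}" and \<tau>: "0 \<le> \<tau>" "\<tau> \<le> 1"
  shows "\<tau> *\<^sub>R Lmap A N (PP A N C \<tau>) - (1 - \<tau>) *\<^sub>R PP A N C \<tau> = - C"
proof -
  have "Mt A N \<tau> *v solv A N C \<tau> = - vecm C"
    using cramer[OF Mt_det[OF hyp \<tau>]] by (simp add: solv_def)
  hence "vecm (\<tau> *\<^sub>R Lmap A N (PP A N C \<tau>) - (1 - \<tau>) *\<^sub>R PP A N C \<tau>) = vecm (- C)"
    by (simp add: PP_def vecm_uminus flip: Mt_vecm)
  thus ?thesis by (simp add: vecm_inj)
qed

lemma transpose_diff': "transpose (X - Y) = transpose X - transpose (Y :: real^'n^'n)"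
  by (simp add: transpose_def vec_eq_iff)

lemma transpose_uminus': "transpose (- X) = - transpose (X :: real^'n^'n)"
  by (simp add: transpose_def vec_eq_iff)

lemma PP_sym:
  assumes hyp: "mat_spectrum (Lmat A N) \<subseteq> {z. Re z < 0}" and \<tau>: "0 \<le> \<tau>" "\<tau> \<le> 1"
    and C: "transpose C = C"
  shows "transpose (PP A N C \<tau>) = PP A N C \<tau>"
proof (rule Mt_uniq[OF hyp \<tau>])
  have "transpose (\<tau> *\<^sub>R Lmap A N (PP A N C \<tau>) - (1 - \<tau>) *\<^sub>R PP A N C \<tau>) = transpose (- C)"
    using PP_eq[OF hyp \<tau>] by simp
  hence "\<tau> *\<^sub>R transpose (Lmap A N (PP A N C \<tau>)) - (1 - \<tau>) *\<^sub>R transpose (PP A N C \<tau>) = - C"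
    using C by (simp add: transpose_diff' transpose_scalar transpose_uminus')
  thus "\<tau> *\<^sub>R Lmap A N (transpose (PP A N C \<tau>)) - (1 - \<tau>) *\<^sub>R transpose (PP A N C \<tau>) =
        \<tau> *\<^sub>R Lmap A N (PP A N C \<tau>) - (1 - \<tau>) *\<^sub>R PP A N C \<tau>"
    using PP_eq[OF hyp \<tau>] by (simp add: Lmap_transpose)
qed

lemma cont_det:
  fixes M :: "real \<Rightarrow> real^'k^'k"
  assumes "\<And>i j. continuous_on S (\<lambda>\<tau>. M \<tau> $ i $ j)"
  shows "continuous_on S (\<lambda>\<tau>. det (M \<tau>))"
  unfolding det_def by (intro continuous_intros assms)

lemma cont_solv:
  assumes hyp: "mat_spectrum (Lmat A N) \<subseteq> {z. Re z < 0}"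
  shows "continuous_on {0..1} (solv A N C)"
proof -
  have e: "continuous_on {0..1} (\<lambda>\<tau>. Mt A N \<tau> $ i $ j)" for i j
    by (simp add: Mt_def) (intro continuous_intros)
  have "continuous_on {0..1} (\<lambda>\<tau>. det (\<chi> i j. if j = k then (- vecm C) $ i else Mt A N \<tau> $ i $ j))" for k
  proof (rule cont_det)
    fix i j
    show "continuous_on {0..1} (\<lambda>\<tau>. (\<chi> i j. if j = k then (- vecm C) $ i else Mt A N \<tau> $ i $ j) $ i $ j)"
    proof (cases "j = k")
      case True thus ?thesis by (simp add: continuous_on_const)
    next
      case False thus ?thesis using e by simp
    qed
  qed
  moreover have "continuous_on {0..1} (\<lambda>\<tau>. det (Mt A N \<tau>))" by (rule cont_det[OF e])
  ultimately show ?thesis unfolding solv_def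
    by (intro continuous_on_vec_lambda continuous_on_divide) (auto simp: Mt_det[OF hyp])
qed



lemma quadLmap:
  "w \<bullet> (Lmap A N P *v w) = w \<bullet> (A *v (P *v w)) + w \<bullet> (P *v (transpose A *v w))
     + (\<Sum>k\<in>UNIV. (transpose (N k) *v w) \<bullet> (P *v (transpose (N k) *v w)))"
proof -
  have "w \<bullet> (N k *v (P *v (transpose (N k) *v w))) = (transpose (N k) *v w) \<bullet> (P *v (transpose (N k) *v w))" for k
    by (rule inner_transpose)
  thus ?thesis
    by (simp add: Lmap_def matrix_vector_mult_add_rdistrib sum_mat_vec inner_add_right inner_sum_right
        flip: matrix_vector_mul_assoc)
qed

lemma PP_pd:
  fixes A :: "real^'n^'n" and N :: "'m::finite \<Rightarrow> real^'n^'n"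
  assumes hyp: "mat_spectrum (Lmat A N) \<subseteq> {z. Re z < 0}"
    and Csym: "transpose C = C" and Cpd: "\<forall>w. w \<noteq> 0 \<longrightarrow> w \<bullet> (C *v w) > 0"
  shows "\<forall>w. w \<noteq> 0 \<longrightarrow> w \<bullet> (PP A N C 1 *v w) > 0"
proof (rule ccontr)
  let ?P = "PP A N C"
  assume "\<not> ?thesis"
  then obtain w1 where w1: "w1 \<noteq> 0" "w1 \<bullet> (?P 1 *v w1) \<le> 0" by (auto simp: not_less)
  define Fq where "Fq p = snd p \<bullet> (?P (fst p) *v snd p)" for p :: "real \<times> (real^'n)"
  have Fq_eq: "Fq = (\<lambda>p. \<Sum>i\<in>UNIV. \<Sum>j\<in>UNIV. snd p $ i * (solv A N C (fst p) $ (i,j) * snd p $ j))"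
    by (simp add: fun_eq_iff Fq_def PP_def unvecm_def inner_vec_def matrix_vector_mult_def sum_distrib_left)
  have cs: "continuous_on ({0..1} \<times> UNIV) (\<lambda>p. solv A N C (fst p))"
    by (rule continuous_on_compose2[OF cont_solv[OF hyp] continuous_on_fst[OF continuous_on_id]]) auto
  have Fcont: "continuous_on ({0..1} \<times> UNIV) Fq"
    unfolding Fq_eq
    by (intro continuous_intros continuous_on_component[OF cs])
  define S where "S = {0..1::real} \<times> sphere (0::real^'n) 1"
  define Z where "Z = S \<inter> Fq -` {..0}"
  have cS: "compact S" by (simp add: S_def compact_Times)
  have "closed Z" unfolding Z_def
    by (rule continuous_closed_preimage[OF continuous_on_subset[OF Fcont]])
       (use cS compact_imp_closed in \<open>auto simp: S_def\<close>)
  moreover have "Z \<inter> S = Z" by (auto simp: Z_def)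
  ultimately have cZ: "compact Z" using closed_Int_compact[OF _ cS, of Z] by simp
  have PPsym: "transpose (?P \<tau>) = ?P \<tau>" if "0 \<le> \<tau>" "\<tau> \<le> 1" for \<tau>
    by (rule PP_sym[OF hyp that Csym])
  have P0: "?P 0 = C" using PP_eq[OF hyp, of 0 C] by simp
  define u1 where "u1 = inverse (norm w1) *\<^sub>R w1"
  have "Fq (1, u1) = (inverse (norm w1))^2 * (w1 \<bullet> (?P 1 *v w1))"
    by (simp add: Fq_def u1_def matrix_vector_mult_scaleR power2_eq_square)
  also have "\<dots> \<le> 0" using w1 by (simp add: mult_nonneg_nonpos)
  finally have "(1, u1) \<in> Z" using w1 by (simp add: Z_def S_def u1_def)
  hence "fst ` Z \<noteq> {}" by auto
  moreover have "compact (fst ` Z)"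
    by (rule compact_continuous_image[OF continuous_on_fst[OF continuous_on_id] cZ])
  ultimately obtain \<tau>0 where t0: "\<tau>0 \<in> fst ` Z" "\<forall>\<tau>\<in>fst ` Z. \<tau>0 \<le> \<tau>"
    using compact_attains_inf by blast
  then obtain w0 where Zw0: "(\<tau>0, w0) \<in> Z" by force
  hence t01: "0 \<le> \<tau>0" "\<tau>0 \<le> 1" and nw0: "norm w0 = 1" and Fw0: "Fq (\<tau>0, w0) \<le> 0"
    by (auto simp: Z_def S_def)
  have below: "Fq (\<tau>, u) > 0" if "0 \<le> \<tau>" "\<tau> < \<tau>0" "norm u = 1" for \<tau> u
  proof (rule ccontr)
    assume "\<not> Fq (\<tau>, u) > 0"
    hence "(\<tau>, u) \<in> Z" using that t01 by (auto simp: Z_def S_def)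
    hence "\<tau>0 \<le> \<tau>" using t0(2) by force
    thus False using that by simp
  qed
  have w00: "w0 \<noteq> 0" using nw0 by auto
  have "\<tau>0 \<noteq> 0"
  proof
    assume "\<tau>0 = 0"
    hence "Fq (\<tau>0, w0) = w0 \<bullet> (C *v w0)" by (simp add: Fq_def P0)
    thus False using Cpd w00 Fw0 by auto
  qed
  hence t0p: "\<tau>0 > 0" using t01 by simp
  have geq: "Fq (\<tau>0, u) \<ge> 0" if nu: "norm u = 1" for u
  proof (rule ccontr)
    assume neg: "\<not> Fq (\<tau>0, u) \<ge> 0"
    have hc: "continuous_on {0..1} (\<lambda>\<tau>. Fq (\<tau>, u))"
      by (rule continuous_on_compose2[OF Fcont]) (auto intro!: continuous_intros)
    obtain d where d: "d > 0" "\<And>\<tau>'. \<tau>' \<in> {0..1} \<Longrightarrow> dist \<tau>' \<tau>0 < d \<Longrightarrow> dist (Fq (\<tau>', u)) (Fq (\<tau>0, u)) < - Fq (\<tau>0, u)"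
      using hc[unfolded continuous_on_iff, rule_format, of \<tau>0 "- Fq (\<tau>0, u)"] t01 neg by auto
    define \<tau>' where "\<tau>' = max 0 (\<tau>0 - d/2)"
    have "\<tau>' \<in> {0..1}" "dist \<tau>' \<tau>0 < d" "0 \<le> \<tau>'" "\<tau>' < \<tau>0"
      using t01 t0p d by (auto simp: \<tau>'_def dist_real_def)
    hence "dist (Fq (\<tau>', u)) (Fq (\<tau>0, u)) < - Fq (\<tau>0, u)" "Fq (\<tau>', u) > 0"
      using d(2) below nu by auto
    thus False by (auto simp: dist_real_def)
  qed
  define P0 where "P0 = ?P \<tau>0"
  have psd: "\<forall>w. w \<bullet> (P0 *v w) \<ge> 0"
  proof
    fix w :: "real^'n"
    show "w \<bullet> (P0 *v w) \<ge> 0"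
    proof (cases "w = 0")
      case True thus ?thesis by simp
    next
      case False
      define u where "u = inverse (norm w) *\<^sub>R w"
      have "norm u = 1" using False by (simp add: u_def)
      hence "0 \<le> Fq (\<tau>0, u)" by (rule geq)
      also have "\<dots> = (inverse (norm w))^2 * (w \<bullet> (P0 *v w))"
        by (simp add: Fq_def u_def P0_def matrix_vector_mult_scaleR power2_eq_square)
      finally show ?thesis using False by (simp add: zero_le_mult_iff)
    qed
  qed
  have "w0 \<bullet> (P0 *v w0) = 0" using psd Fw0 by (simp add: Fq_def P0_def order_antisym)
  hence ker: "P0 *v w0 = 0" by (rule psd_kernel[OF PPsym[OF t01, folded P0_def] psd])
  have E: "\<tau>0 *\<^sub>R Lmap A N P0 - (1 - \<tau>0) *\<^sub>R P0 = - C"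
    unfolding P0_def by (rule PP_eq[OF hyp t01])
  have "w0 \<bullet> (Lmap A N P0 *v w0) \<ge> 0"
  proof -
    have a: "w0 \<bullet> (A *v (P0 *v w0)) = 0" using ker by simp
    have b: "w0 \<bullet> (P0 *v (transpose A *v w0)) = 0"
      using inner_Qsym[OF PPsym[OF t01, folded P0_def], of w0 "transpose A *v w0"] ker by simp
    have c: "(\<Sum>k\<in>UNIV. (transpose (N k) *v w0) \<bullet> (P0 *v (transpose (N k) *v w0))) \<ge> 0"
      using psd by (intro sum_nonneg) auto
    show ?thesis unfolding quadLmap using a b c by simp
  qed
  moreover have "w0 \<bullet> ((\<tau>0 *\<^sub>R Lmap A N P0 - (1 - \<tau>0) *\<^sub>R P0) *v w0) =
      \<tau>0 * (w0 \<bullet> (Lmap A N P0 *v w0)) - (1 - \<tau>0) * (w0 \<bullet> (P0 *v w0))"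
    by (simp add: matrix_vector_mult_diff_rdistrib inner_diff_right flip: scaleR_matrix_vector_assoc)
  moreover have "w0 \<bullet> ((- C) *v w0) < 0" using Cpd w00 by (simp add: neg_mat_vec)
  ultimately show False using E ker t0p by (simp add: zero_le_mult_iff) (smt (verit) mult_nonneg_nonneg)
qed



lemma two_inner_le: "2 * (a \<bullet> b) \<le> a \<bullet> a + b \<bullet> (b :: real^'n)"
proof -
  have "0 \<le> (a - b) \<bullet> (a - b)" by simp
  thus ?thesis by (simp add: inner_diff_left inner_diff_right inner_commute)
qed

lemma psd_two:
  fixes P :: "real^'n^'n"
  assumes sym: "transpose P = P" and psd: "\<forall>w. w \<bullet> (P *v w) \<ge> 0"
  shows "2 * (a \<bullet> (P *v c)) \<le> a \<bullet> (P *v a) + c \<bullet> (P *v c)"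
proof -
  have "0 \<le> (a - c) \<bullet> (P *v (a - c))" using psd by blast
  also have "\<dots> = a \<bullet> (P *v a) - a \<bullet> (P *v c) - c \<bullet> (P *v a) + c \<bullet> (P *v c)"
    unfolding matrix_vector_mult_diff_distrib inner_diff_left inner_diff_right by simp
  also have "\<dots> = a \<bullet> (P *v a) - 2 * (a \<bullet> (P *v c)) + c \<bullet> (P *v c)"
    using inner_Qsym[OF sym, of c a] by simp
  finally show ?thesis by simp
qed

lemma alg_ineq:
  fixes P :: "real^'n^'n" and A :: "real^'n^'n" and N :: "'m::finite \<Rightarrow> real^'n^'n" and B :: "real^'m^'n"
    and y :: "real^'n" and uu :: "real^'m"
  assumes sym: "transpose P = P" and psd: "\<forall>w. w \<bullet> (P *v w) \<ge> 0"
    and Lyap: "Lmap A N P = - (B ** transpose B + \<epsilon> *\<^sub>R mat 1)" and eps: "\<epsilon> \<ge> 0"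
  shows "2 * ((A *v (P *v y) + B *v uu + (\<Sum>k\<in>UNIV. (uu $ k) *\<^sub>R (N k *v (P *v y)))) \<bullet> y)
          \<le> (norm (\<chi> k. if N k = 0 then 0 else uu $ k))\<^sup>2 * ((P *v y) \<bullet> y) + (norm uu)\<^sup>2"
proof -
  define b where "b = transpose B *v y"
  define a where "a k = transpose (N k) *v y" for k
  define c where "c k = (if N k = 0 then 0 else uu $ k)" for k
  define \<phi> where "\<phi> = (P *v y) \<bullet> y"
  have h1: "y \<bullet> (Lmap A N P *v y) = 2 * ((A *v (P *v y)) \<bullet> y) + (\<Sum>k\<in>UNIV. a k \<bullet> (P *v a k))"
  proof -
    have "y \<bullet> (P *v (transpose A *v y)) = (transpose A *v y) \<bullet> (P *v y)"
      by (rule inner_Qsym[OF sym])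
    also have "\<dots> = y \<bullet> (A *v (P *v y))" using inner_transpose[of y A "P *v y"] by simp
    finally have "y \<bullet> (P *v (transpose A *v y)) = y \<bullet> (A *v (P *v y))" .
    thus ?thesis unfolding quadLmap by (simp add: a_def inner_commute)
  qed
  have h2: "y \<bullet> (Lmap A N P *v y) = - (b \<bullet> b) - \<epsilon> * (y \<bullet> y)"
  proof -
    have "y \<bullet> ((B ** transpose B) *v y) = y \<bullet> (B *v (transpose B *v y))"
      by (simp only: matrix_vector_mul_assoc)
    also have "\<dots> = b \<bullet> b" unfolding b_def by (rule inner_transpose)
    finally have "y \<bullet> ((B ** transpose B) *v y) = b \<bullet> b" .
    thus ?thesis unfolding Lyap
      by (simp add: neg_mat_vec matrix_vector_mult_add_rdistrib matrix_vector_mult_diff_rdistrib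
          inner_add_right inner_diff_right flip: scaleR_matrix_vector_assoc)
  qed
  have h3: "2 * ((B *v uu) \<bullet> y) \<le> uu \<bullet> uu + b \<bullet> b"
  proof -
    have "(B *v uu) \<bullet> y = uu \<bullet> b" using inner_transpose[of y B uu] by (simp add: b_def inner_commute)
    thus ?thesis using two_inner_le[of uu b] by simp
  qed
  have h4: "2 * (((uu $ k) *\<^sub>R (N k *v (P *v y))) \<bullet> y) \<le> a k \<bullet> (P *v a k) + (c k)\<^sup>2 * \<phi>" for k
  proof (cases "N k = 0")
    case True thus ?thesis by (simp add: a_def c_def)
  next
    case False
    have "((uu $ k) *\<^sub>R (N k *v (P *v y))) \<bullet> y = a k \<bullet> (P *v ((uu $ k) *\<^sub>R y))"
      using inner_transpose[of y "N k" "P *v y"]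
      by (simp add: a_def inner_commute matrix_vector_mult_scaleR)
    hence "2 * (((uu $ k) *\<^sub>R (N k *v (P *v y))) \<bullet> y) \<le> a k \<bullet> (P *v a k) + ((uu $ k) *\<^sub>R y) \<bullet> (P *v ((uu $ k) *\<^sub>R y))"
      using psd_two[OF sym psd, of "a k" "(uu $ k) *\<^sub>R y"] by simp
    also have "((uu $ k) *\<^sub>R y) \<bullet> (P *v ((uu $ k) *\<^sub>R y)) = (c k)\<^sup>2 * \<phi>"
      using False by (simp add: c_def \<phi>_def matrix_vector_mult_scaleR power2_eq_square inner_commute)
    finally show ?thesis .
  qed
  have hn: "(norm (\<chi> k. if N k = 0 then 0 else uu $ k))\<^sup>2 = (\<Sum>k\<in>UNIV. (c k)\<^sup>2)"
    unfolding power2_norm_eq_inner by (simp add: inner_vec_def c_def power2_eq_square)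
  have hu: "(norm uu)\<^sup>2 = uu \<bullet> uu" by (simp add: power2_norm_eq_inner)
  have "2 * ((A *v (P *v y) + B *v uu + (\<Sum>k\<in>UNIV. (uu $ k) *\<^sub>R (N k *v (P *v y)))) \<bullet> y)
      = 2 * ((A *v (P *v y)) \<bullet> y) + 2 * ((B *v uu) \<bullet> y) + (\<Sum>k\<in>UNIV. 2 * (((uu $ k) *\<^sub>R (N k *v (P *v y))) \<bullet> y))"
    by (simp add: inner_add_left inner_sum_left sum_distrib_left distrib_left)
  also have "\<dots> \<le> 2 * ((A *v (P *v y)) \<bullet> y) + (uu \<bullet> uu + b \<bullet> b) + (\<Sum>k\<in>UNIV. a k \<bullet> (P *v a k) + (c k)\<^sup>2 * \<phi>)"
    using h3 h4 by (intro add_mono sum_mono) auto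
  also have "\<dots> = (2 * ((A *v (P *v y)) \<bullet> y) + (\<Sum>k\<in>UNIV. a k \<bullet> (P *v a k))) + b \<bullet> b + uu \<bullet> uu + (\<Sum>k\<in>UNIV. (c k)\<^sup>2) * \<phi>"
    by (simp add: sum.distrib sum_distrib_right)
  also have "\<dots> = uu \<bullet> uu + (\<Sum>k\<in>UNIV. (c k)\<^sup>2) * \<phi> - \<epsilon> * (y \<bullet> y)"
    using h1 h2 by simp
  also have "\<dots> \<le> uu \<bullet> uu + (\<Sum>k\<in>UNIV. (c k)\<^sup>2) * \<phi>"
    using eps by simp
  finally show ?thesis unfolding hn hu \<phi>_def by simp
qed



lemma Lmap_add: "Lmap A N (X + Y) = Lmap A N X + Lmap A N Y"
proof -
  have "vecm (Lmap A N (X + Y)) = vecm (Lmap A N X + Lmap A N Y)"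
    by (simp add: vecm_add flip: Lmat_vecm add: matrix_vector_right_distrib)
  thus ?thesis by (simp add: vecm_inj)
qed

lemma Lmap_scaleR: "Lmap A N (c *\<^sub>R X) = c *\<^sub>R Lmap A N X"
proof -
  have "vecm (Lmap A N (c *\<^sub>R X)) = vecm (c *\<^sub>R Lmap A N X)"
    by (simp add: vecm_scaleR flip: Lmat_vecm add: matrix_vector_mult_scaleR)
  thus ?thesis by (simp add: vecm_inj)
qed

lemma L2_int:
  fixes u :: "real \<Rightarrow> real^'m"
  assumes "L2 u" "t \<ge> 0"
  shows "(\<lambda>s. (norm (u s))\<^sup>2) integrable_on {0..t}"
    and "integral {0..t} (\<lambda>s. (norm (u s))\<^sup>2) \<le> L2_norm_sq u"
proof -
  let ?k = "\<lambda>s. (norm (u s))\<^sup>2"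
  have si: "set_integrable lborel {0..} ?k" using assms(1) by (simp add: L2_def)
  have sit: "set_integrable lborel {0..t} ?k"
    by (rule set_integrable_subset[OF si]) auto
  have sig: "set_integrable lborel {t<..} ?k"
    by (rule set_integrable_subset[OF si]) (use assms(2) in auto)
  show "?k integrable_on {0..t}" using set_borel_integral_eq_integral(1)[OF sit] .
  have eq: "(LINT s:{0..t}|lborel. ?k s) = integral {0..t} ?k"
    using set_borel_integral_eq_integral(2)[OF sit] .
  have un: "{0..} = {0..t} \<union> {t<..}" using assms(2) by auto
  have "L2_norm_sq u = (LINT s:{0..t}|lborel. ?k s) + (LINT s:{t<..}|lborel. ?k s)"
    unfolding L2_norm_sq_def un by (rule set_integral_Un[OF _ sit sig]) auto
  moreover have "(LINT s:{t<..}|lborel. ?k s) \<ge> 0"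
    unfolding set_lebesgue_integral_def by (rule Bochner_Integration.integral_nonneg) simp
  ultimately show "integral {0..t} ?k \<le> L2_norm_sq u" using eq by simp
qed

lemma L2_nonneg: "L2_norm_sq u \<ge> 0"
  unfolding L2_norm_sq_def set_lebesgue_integral_def by (rule Bochner_Integration.integral_nonneg) simp

lemma L2_u_zero:
  fixes u :: "real \<Rightarrow> real^'m" and N :: "'m \<Rightarrow> real^'n^'n"
  assumes "L2 u"
  shows "L2 (u_zero N u)"
proof -
  define hv where "hv v = (\<chi> k. (if N k = 0 then 0 else 1) * (v :: real^'m) $ k)" for v
  have hv_eq: "hv v = (\<chi> k. if N k = 0 then 0 else v $ k)" for v by (simp add: hv_def vec_eq_iff)
  have hvc: "continuous_on UNIV hv" unfolding hv_def by (intro continuous_intros)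
  have um: "(\<lambda>s. indicator {0..} s *\<^sub>R u s) \<in> borel_measurable lborel"
    using assms by (simp add: L2_def set_borel_measurable_def)
  have meas: "set_borel_measurable lborel {0..} (u_zero N u)"
  proof -
    have "(\<lambda>s. hv (indicator {0..} s *\<^sub>R u s)) \<in> borel_measurable lborel"
      by (rule borel_measurable_continuous_on[OF hvc um])
    moreover have "(\<lambda>s. hv (indicator {0..} s *\<^sub>R u s)) = (\<lambda>s. indicator {0..} s *\<^sub>R u_zero N u s)"
      by (auto simp: fun_eq_iff hv_eq u_zero_def vec_eq_iff indicator_def)
    ultimately show ?thesis by (simp add: set_borel_measurable_def)
  qed
  have nle: "norm (u_zero N u s) \<le> norm (u s)" for s
  proof -
    have "(norm (u_zero N u s))\<^sup>2 \<le> (norm (u s))\<^sup>2"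
      unfolding power2_norm_eq_inner inner_vec_def u_zero_def
      by (intro sum_mono) auto
    thus ?thesis by (simp add: power2_le_iff_abs_le)
  qed
  have meas2: "set_borel_measurable lborel {0..} (\<lambda>s. (norm (u_zero N u s))\<^sup>2)"
  proof -
    have c2: "continuous_on UNIV (\<lambda>v::real^'m. (norm v)\<^sup>2)" by (intro continuous_intros)
    have "(\<lambda>s. (norm (indicator {0..} s *\<^sub>R u_zero N u s))\<^sup>2) \<in> borel_measurable lborel"
      using borel_measurable_continuous_on[OF c2 meas[unfolded set_borel_measurable_def]] .
    moreover have "(\<lambda>s. (norm (indicator {0..} s *\<^sub>R u_zero N u s))\<^sup>2) = (\<lambda>s. indicator {0..} s *\<^sub>R (norm (u_zero N u s))\<^sup>2)"
      by (auto simp: fun_eq_iff indicator_def)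
    ultimately show ?thesis by (simp add: set_borel_measurable_def)
  qed
  have "set_integrable lborel {0..} (\<lambda>s. (norm (u_zero N u s))\<^sup>2)"
  proof (rule set_integrable_bound[OF _ meas2])
    show "set_integrable lborel {0..} (\<lambda>s. (norm (u s))\<^sup>2)" using assms by (simp add: L2_def)
    show "AE s in lborel. s \<in> {0..} \<longrightarrow> norm ((norm (u_zero N u s))\<^sup>2) \<le> norm ((norm (u s))\<^sup>2)"
      using nle by (auto intro!: power_mono)
  qed
  thus ?thesis using meas by (simp add: L2_def)
qed



theorem corollary4p2:
  fixes A :: "real^'n^'n" and N :: "'m::finite \<Rightarrow> real^'n^'n" and B :: "real^'m^'n"
    and u :: "real \<Rightarrow> real^'m" and x :: "real \<Rightarrow> real^'n"
    and P :: "real^'n^'n" and v :: "'n \<Rightarrow> real^'n" and lam :: "'n \<Rightarrow> real"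
  assumes "hurwitz A"
    and "L2 u"
    and "solves_bilinear A B N u x"
    and "mat_spectrum (kron A (mat 1) + kron (mat 1) A + (\<Sum>k\<in>UNIV. kron (N k) (N k)))
           \<subseteq> {z. Re z < 0}"
    and "A ** P + P ** transpose A + (\<Sum>k\<in>UNIV. N k ** P ** transpose (N k))
           = - (B ** transpose B)"
    and "\<forall>i j. v i \<bullet> v j = (if i = j then 1 else 0)"
    and "\<forall>i. P *v v i = lam i *\<^sub>R v i"
  shows "\<forall>k. \<forall>t\<ge>0. \<bar>x t \<bullet> v k\<bar>
           \<le> sqrt (lam k) * exp (0.5 * L2_norm_sq (u_zero N u)) * sqrt (L2_norm_sq u)"
proof (intro allI impI)
  fix kk :: 'n and t :: real
  assume t: "t \<ge> 0"
  have hyp: "mat_spectrum (Lmat A N) \<subseteq> {z. Re z < 0}" using assms(4) by (simp add: Lmat_def)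
  have LP: "Lmap A N P = - (B ** transpose B)" using assms(5) by (simp add: Lmap_def)
  define R where "R = PP A N (mat 1) 1"
  have LR: "Lmap A N R = - mat 1" using PP_eq[OF hyp, of 1 "mat 1"] by (simp add: R_def)
  define E0 where "E0 = exp (L2_norm_sq (u_zero N u)) * L2_norm_sq u"
  define r where "r = v kk \<bullet> (R *v v kk)"
  have vv: "v kk \<bullet> v kk = 1" using assms(6) by simp
  have vP: "v kk \<bullet> (P *v v kk) = lam kk" using assms(7) vv by simp
  define f where "f = bilin_rhs A B N u x"
  define g where "g = (\<lambda>s. (norm (u_zero N u s))\<^sup>2)"
  define k where "k = (\<lambda>s. (norm (u s))\<^sup>2)"
  have sol: "\<forall>t\<ge>0. f absolutely_integrable_on {0..t} \<and> x t = integral {0..t} f"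
    using assms(3) by (simp add: solves_bilinear_def f_def)
  have fint: "f absolutely_integrable_on {0..t}" using sol t by blast
  have xdef: "\<forall>s\<in>{0..t}. x s = integral {0..s} f" using sol by auto
  have L2z: "L2 (u_zero N u)" by (rule L2_u_zero[OF assms(2)])
  have gint: "g integrable_on {0..t}" and Gle: "integral {0..t} g \<le> L2_norm_sq (u_zero N u)"
    using L2_int[OF L2z t] by (simp_all add: g_def)
  have kint: "k integrable_on {0..t}" and Kle: "integral {0..t} k \<le> L2_norm_sq u"
    using L2_int[OF assms(2) t] by (simp_all add: k_def)
  have K0: "integral {0..t} k \<ge> 0" by (rule integral_nonneg[OF kint]) (simp add: k_def)
  have E0nn: "E0 \<ge> 0" using L2_nonneg[of u] by (simp add: E0_def)
  have eps_bound: "(x t \<bullet> v kk)\<^sup>2 \<le> (lam kk + \<epsilon> * r) * E0" if eps: "\<epsilon> > 0" for \<epsilon>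
  proof -
    define C where "C = B ** transpose B + \<epsilon> *\<^sub>R mat 1"
    have Csym: "transpose C = C"
      by (simp add: C_def transpose_add' transpose_scalar matrix_transpose_mul)
    have Cpd: "\<forall>w. w \<noteq> 0 \<longrightarrow> w \<bullet> (C *v w) > 0"
    proof (intro allI impI)
      fix w :: "real^'n" assume w: "w \<noteq> 0"
      have "w \<bullet> (C *v w) = (transpose B *v w) \<bullet> (transpose B *v w) + \<epsilon> * (w \<bullet> w)"
      proof -
        have "w \<bullet> ((B ** transpose B) *v w) = (transpose B *v w) \<bullet> (transpose B *v w)"
          unfolding matrix_vector_mul_assoc[symmetric] by (rule inner_transpose)
        thus ?thesis
          by (simp add: C_def matrix_vector_mult_add_rdistrib inner_add_right flip: scaleR_matrix_vector_assoc)
      qed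
      moreover have "w \<bullet> w > 0" using w by simp
      ultimately show "w \<bullet> (C *v w) > 0" using eps
        by (metis add_nonneg_pos inner_ge_zero mult_pos_pos)
    qed
    define Pe where "Pe = PP A N C 1"
    have Pe_pd: "\<forall>w. w \<noteq> 0 \<longrightarrow> w \<bullet> (Pe *v w) > 0"
      unfolding Pe_def by (rule PP_pd[OF hyp Csym Cpd])
    have Pe_psd: "\<forall>w. w \<bullet> (Pe *v w) \<ge> 0"
      using Pe_pd by (metis inner_zero_left less_eq_real_def)
    have Pe_sym: "transpose Pe = Pe" unfolding Pe_def by (rule PP_sym[OF hyp _ _ Csym]) auto
    have Pe_eq: "Lmap A N Pe = - C" using PP_eq[OF hyp, of 1 C] by (simp add: Pe_def)
    have Pe_dec: "Pe = P + \<epsilon> *\<^sub>R R"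
    proof (rule Mt_uniq[OF hyp, of 1])
      show "1 *\<^sub>R Lmap A N Pe - (1 - 1) *\<^sub>R Pe = 1 *\<^sub>R Lmap A N (P + \<epsilon> *\<^sub>R R) - (1 - 1) *\<^sub>R (P + \<epsilon> *\<^sub>R R)"
        by (simp add: Pe_eq Lmap_add Lmap_scaleR LP LR C_def)
    qed auto
    have vPe: "v kk \<bullet> (Pe *v v kk) = lam kk + \<epsilon> * r"
      by (simp add: Pe_dec matrix_vector_mult_add_rdistrib inner_add_right vP r_def
          flip: scaleR_matrix_vector_assoc)
    have "inj (\<lambda>w. Pe *v w)"
    proof (rule injI)
      fix a b assume "Pe *v a = Pe *v b"
      hence "Pe *v (a - b) = 0" by (simp add: matrix_vector_mult_diff_distrib)
      hence "(a - b) \<bullet> (Pe *v (a - b)) = 0" by simp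
      thus "a = b" using Pe_pd[rule_format, of "a - b"] by auto
    qed
    hence "det Pe \<noteq> 0" using det_nz_iff_inj[of "\<lambda>w. Pe *v w"] by simp
    then obtain Q where Q: "Pe ** Q = mat 1" "Q ** Pe = mat 1"
      unfolding invertible_det_nz[symmetric] invertible_def by blast
    have Qsym: "transpose Q = Q"
    proof -
      have "transpose Q ** Pe = mat 1"
        by (metis Pe_sym Q(1) matrix_transpose_mul transpose_mat)
      hence "transpose Q = (transpose Q ** Pe) ** Q"
        by (metis Q(1) matrix_mul_assoc matrix_mul_rid)
      thus ?thesis using \<open>transpose Q ** Pe = mat 1\<close> by (simp add: matrix_mul_lid)
    qed
    have PQ: "Pe *v (Q *v w) = w" for w
      by (simp add: matrix_vector_mul_assoc Q(1))
    have Qpsd: "\<forall>w. w \<bullet> (Q *v w) \<ge> 0"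
    proof
      fix w :: "real^'n"
      have "w \<bullet> (Q *v w) = (Q *v w) \<bullet> (Pe *v (Q *v w))" by (simp add: PQ inner_commute)
      thus "w \<bullet> (Q *v w) \<ge> 0" using Pe_psd by simp
    qed
    have ineq: "\<forall>s\<in>{0..t}. 2 * (f s \<bullet> (Q *v x s)) \<le> g s * (x s \<bullet> (Q *v x s)) + k s"
    proof
      fix s assume "s \<in> {0..t}"
      have Lyap: "Lmap A N Pe = - (B ** transpose B + \<epsilon> *\<^sub>R mat 1)" using Pe_eq by (simp add: C_def)
      have "2 * ((A *v (Pe *v (Q *v x s)) + B *v u s + (\<Sum>k\<in>UNIV. (u s $ k) *\<^sub>R (N k *v (Pe *v (Q *v x s))))) \<bullet> (Q *v x s))
          \<le> (norm (\<chi> k. if N k = 0 then 0 else u s $ k))\<^sup>2 * ((Pe *v (Q *v x s)) \<bullet> (Q *v x s)) + (norm (u s))\<^sup>2"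
        by (rule alg_ineq[OF Pe_sym Pe_psd Lyap]) (use eps in simp)
      thus "2 * (f s \<bullet> (Q *v x s)) \<le> g s * (x s \<bullet> (Q *v x s)) + k s"
        by (simp add: PQ f_def bilin_rhs_def g_def k_def u_zero_def inner_commute)
    qed
    have en: "x t \<bullet> (Q *v x t) \<le> exp (integral {0..t} g) * integral {0..t} k"
      by (rule energy_estimate[OF t fint xdef gint kint _ _ Qsym Qpsd ineq]) (auto simp: g_def k_def)
    also have "\<dots> \<le> E0" unfolding E0_def
      using Gle Kle K0 by (intro mult_mono) auto
    finally have phiE: "x t \<bullet> (Q *v x t) \<le> E0" .
    have cs: "(v kk \<bullet> (Pe *v (Q *v x t)))\<^sup>2 \<le> (v kk \<bullet> (Pe *v v kk)) * ((Q *v x t) \<bullet> (Pe *v (Q *v x t)))"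
      by (rule psd_cs[OF Pe_sym Pe_psd])
    hence "(x t \<bullet> v kk)\<^sup>2 \<le> (lam kk + \<epsilon> * r) * (x t \<bullet> (Q *v x t))"
      by (simp add: PQ vPe inner_commute)
    also have "\<dots> \<le> (lam kk + \<epsilon> * r) * E0"
      using phiE Pe_psd vPe by (intro mult_left_mono) (auto, metis)
    finally show ?thesis .
  qed
  have main: "(x t \<bullet> v kk)\<^sup>2 - lam kk * E0 \<le> 0"
  proof (rule le_of_all_eps[where d = "r * E0"])
    fix e :: real assume "e > 0"
    thus "(x t \<bullet> v kk)\<^sup>2 - lam kk * E0 \<le> e * (r * E0)"
      using eps_bound[of e] by (simp add: algebra_simps)
  qed
  have "\<bar>x t \<bullet> v kk\<bar> = sqrt ((x t \<bullet> v kk)\<^sup>2)" by simp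
  also have "\<dots> \<le> sqrt (lam kk * E0)" using main by (intro real_sqrt_le_mono) simp
  also have "\<dots> = sqrt (lam kk) * (sqrt (exp (L2_norm_sq (u_zero N u))) * sqrt (L2_norm_sq u))"
    by (simp add: E0_def real_sqrt_mult)
  also have "sqrt (exp (L2_norm_sq (u_zero N u))) = exp (0.5 * L2_norm_sq (u_zero N u))"
  proof (rule real_sqrt_unique)
    show "(exp (0.5 * L2_norm_sq (u_zero N u)))\<^sup>2 = exp (L2_norm_sq (u_zero N u))"
      by (simp add: power2_eq_square flip: exp_add)
  qed simp
  finally show "\<bar>x t \<bullet> v kk\<bar> \<le> sqrt (lam kk) * exp (0.5 * L2_norm_sq (u_zero N u)) * sqrt (L2_norm_sq u)"
    by (simp add: mult.assoc)
qed

end
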